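(* Let $q\in L^1_{\mathrm{loc}}(\mathbb R)$, $z_1\in\mathbb C\setminus\mathbb R$, and let $\Psi(z_1,\cdot)=(\psi_1,\psi_2)^\top$ be a $z_1$-wave function associated with $q$ satisfying $\int_{\mathbb R}\|\Psi(z_1,x)\|_{\mathbb C^2}^{-2}dx<\infty$. Let $q^{(1)}_{z_1}=q+4\,\mathrm{Im}(z_1)\psi_1\overline{\psi_2}\|\Psi(z_1,\cdot)\|_{\mathbb C^2}^{-2}$. Then $z_1$ and $\overline{z_1}$ are eigenvalues of $D(q^{(1)}_{z_1})$ of geometric multiplicity one, with eigenfunctions $$\Phi^{(1)}(z_1,x)=\mathrm{Im}(z_1)\|\Psi(z_1,x)\|_{\mathbb C^2}^{-2}\mathcal K\Psi(z_1,x),\qquad \mathcal K\Phi^{(1)}(z_1,x)=-\mathrm{Im}(z_1)\|\Psi(z_1,x)\|_{\mathbb C^2}^{-2}\Psi(z_1,x),$$ i.e. both belong to $\mathrm{dom}(D(q^{(1)}_{z_1}))$ and $D(q^{(1)}_{z_1})\Phi^{(1)}(z_1)=z_1\Phi^{(1)}(z_1)$, $D(q^{(1)}_{z_1})\mathcal K\Phi^{(1)}(z_1)=\overline{z_1}\mathcal K\Phi^{(1)}(z_1)$.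
   Context: Let $q\in L^1_{\mathrm{loc}}(\mathbb R)$. For $z\in\mathbb C$, a $z$-wave function associated with $q$ is a function $\Psi(z,\cdot)=(\psi_1(z,\cdot),\psi_2(z,\cdot))^\top\in AC_{\mathrm{loc}}(\mathbb R)^2$, not identically zero, with $\psi_1'=-iz\psi_1+q\psi_2$, $\psi_2'=iz\psi_2-\overline{q}\psi_1$ a.e.; equivalently $M(q)\Psi=z\Psi$ with $M(q)=i\begin{pmatrix}\frac{d}{dx}&-q\\-\overline q&-\frac{d}{dx}\end{pmatrix}$. For $r\in L^1_{\mathrm{loc}}(\mathbb R)$, $D(r)$ is the maximal operator $F\mapsto M(r)F$ in $L^2(\mathbb R)^2$ on $\{F\in L^2(\mathbb R)^2\cap AC_{\mathrm{loc}}(\mathbb R)^2: M(r)F\in L^2(\mathbb R)^2\}$. $\mathcal K(a,b)^\top=(\overline b,-\overline a)^\top$ pointwise. A wave function never vanishes, so $q^{(1)}_{z_1}$ is well defined and in $L^1_{\mathrm{loc}}(\mathbb R)$. *)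

theory Defs
  imports "HOL-Analysis.Analysis"
begin

definition AC_on_ivl :: "real \<Rightarrow> real \<Rightarrow> (real \<Rightarrow> 'a::real_normed_vector) \<Rightarrow> bool" where
  "AC_on_ivl a b f \<longleftrightarrow>
     (\<forall>e>0. \<exists>d>0. \<forall>(n::nat) (u::nat \<Rightarrow> real) (v::nat \<Rightarrow> real).
        (\<forall>i<n. a \<le> u i \<and> u i \<le> v i \<and> v i \<le> b) \<and>
        (\<forall>i<n. \<forall>j<n. i \<noteq> j \<longrightarrow> v i \<le> u j \<or> v j \<le> u i) \<and>
        (\<Sum>i<n. v i - u i) < d
        \<longrightarrow> (\<Sum>i<n. norm (f (v i) - f (u i))) < e)"

definition AC_loc :: "(real \<Rightarrow> 'a::real_normed_vector) \<Rightarrow> bool" where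
  "AC_loc f \<longleftrightarrow> (\<forall>a b. AC_on_ivl a b f)"

definition L1_loc :: "(real \<Rightarrow> complex) \<Rightarrow> bool" where
  "L1_loc q \<longleftrightarrow> (\<forall>a b. set_integrable lborel {a..b} q)"

text \<open>Square integrable C^2-valued functions (norm on complex \<times> complex is the Euclidean norm).\<close>
definition L2 :: "(real \<Rightarrow> complex \<times> complex) \<Rightarrow> bool" where
  "L2 F \<longleftrightarrow> F \<in> borel_measurable lborel \<and> integrable lborel (\<lambda>x. (norm (F x))\<^sup>2)"

text \<open>Pointwise action of M(r) on F at x, given the derivative d = F'(x).\<close>
definition Mop :: "(real \<Rightarrow> complex) \<Rightarrow> (real \<Rightarrow> complex \<times> complex) \<Rightarrow> real
                    \<Rightarrow> complex \<times> complex \<Rightarrow> complex \<times> complex" where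
  "Mop r F x d = (\<i> * (fst d - r x * snd (F x)), \<i> * (- cnj (r x) * fst (F x) - snd d))"

definition cscale :: "complex \<Rightarrow> complex \<times> complex \<Rightarrow> complex \<times> complex" where
  "cscale c v = (c * fst v, c * snd v)"

definition Kop :: "complex \<times> complex \<Rightarrow> complex \<times> complex" where
  "Kop v = (cnj (snd v), - cnj (fst v))"

definition wave_function :: "(real \<Rightarrow> complex) \<Rightarrow> complex \<Rightarrow> (real \<Rightarrow> complex \<times> complex) \<Rightarrow> bool" where
  "wave_function q z \<Psi> \<longleftrightarrow> AC_loc \<Psi> \<and> (\<exists>x. \<Psi> x \<noteq> 0) \<and>
     (AE x in lborel. \<exists>d. (\<Psi> has_vector_derivative d) (at x) \<and>
         d = (- \<i> * z * fst (\<Psi> x) + q x * snd (\<Psi> x),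
              \<i> * z * snd (\<Psi> x) - cnj (q x) * fst (\<Psi> x)))"

text \<open>Graph of the maximal operator D(r): F \<in> dom D(r) and D(r) F = G (as elements of L^2).\<close>
definition D_graph :: "(real \<Rightarrow> complex) \<Rightarrow> (real \<Rightarrow> complex \<times> complex) \<Rightarrow> (real \<Rightarrow> complex \<times> complex) \<Rightarrow> bool" where
  "D_graph r F G \<longleftrightarrow> L2 F \<and> AC_loc F \<and> L2 G \<and>
     (AE x in lborel. \<exists>d. (F has_vector_derivative d) (at x) \<and> Mop r F x d = G x)"

definition D_dom :: "(real \<Rightarrow> complex) \<Rightarrow> (real \<Rightarrow> complex \<times> complex) \<Rightarrow> bool" where
  "D_dom r F \<longleftrightarrow> (\<exists>G. D_graph r F G)"

definition eigenfunction :: "(real \<Rightarrow> complex) \<Rightarrow> complex \<Rightarrow> (real \<Rightarrow> complex \<times> complex) \<Rightarrow> bool" where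
  "eigenfunction r z F \<longleftrightarrow> D_graph r F (\<lambda>x. cscale z (F x)) \<and> \<not> (AE x in lborel. F x = 0)"

definition simple_eigenvalue_with :: "(real \<Rightarrow> complex) \<Rightarrow> complex \<Rightarrow> (real \<Rightarrow> complex \<times> complex) \<Rightarrow> bool" where
  "simple_eigenvalue_with r z F \<longleftrightarrow> eigenfunction r z F \<and>
     (\<forall>G. D_graph r G (\<lambda>x. cscale z (G x)) \<longrightarrow> (\<exists>c. AE x in lborel. G x = cscale c (F x)))"

end

theory Submission
  imports Defs
begin
definition ACfam :: "real \<Rightarrow> real \<Rightarrow> nat \<Rightarrow> (nat \<Rightarrow> real) \<Rightarrow> (nat \<Rightarrow> real) \<Rightarrow> bool" where
  "ACfam a b n u v \<longleftrightarrow> (\<forall>i<n. a \<le> u i \<and> u i \<le> v i \<and> v i \<le> b) \<and>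
        (\<forall>i<n. \<forall>j<n. i \<noteq> j \<longrightarrow> v i \<le> u j \<or> v j \<le> u i)"

lemma AC_on_ivl_alt: "AC_on_ivl a b f \<longleftrightarrow> (\<forall>e>0. \<exists>d>0. \<forall>n u v. ACfam a b n u v \<and> (\<Sum>i<n. v i - u i) < d
        \<longrightarrow> (\<Sum>i<n. norm (f (v i) - f (u i))) < e)"
  unfolding AC_on_ivl_def ACfam_def by (simp only: conj_assoc)

lemma AC_on_ivlD:
  assumes "AC_on_ivl a b f" "e > 0"
  obtains d where "d > 0" "\<And>n u v. ACfam a b n u v \<Longrightarrow> (\<Sum>i<n. v i - u i) < d
        \<Longrightarrow> (\<Sum>i<n. norm (f (v i) - f (u i))) < e"
proof -
  from assms have "\<exists>d>0. \<forall>n u v. ACfam a b n u v \<and> (\<Sum>i<n. v i - u i) < d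
        \<longrightarrow> (\<Sum>i<n. norm (f (v i) - f (u i))) < e" unfolding AC_on_ivl_alt by (elim allE impE)
  then obtain d where "d > 0" "\<forall>n u v. ACfam a b n u v \<and> (\<Sum>i<n. v i - u i) < d
        \<longrightarrow> (\<Sum>i<n. norm (f (v i) - f (u i))) < e" by (elim exE conjE)
  then show ?thesis using that by auto
qed

lemma AC_on_ivlI:
  assumes "\<And>e. e > 0 \<Longrightarrow> \<exists>d>0. \<forall>n u v. ACfam a b n u v \<and> (\<Sum>i<n. v i - u i) < d
        \<longrightarrow> (\<Sum>i<n. norm (f (v i) - f (u i))) < e"
  shows "AC_on_ivl a b f"
  unfolding AC_on_ivl_alt using assms by (intro allI impI)
lemma AC_cont:
  assumes "AC_on_ivl a b f"
  shows "continuous_on {a..b} f"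
  unfolding continuous_on_iff
proof (intro ballI allI impI)
  fix x e :: real assume x: "x \<in> {a..b}" and e: "0 < e"
  obtain d where d: "d > 0" and H: "\<And>n u v. ACfam a b n u v \<Longrightarrow> (\<Sum>i<n. v i - u i) < d
        \<Longrightarrow> (\<Sum>i<n. norm (f (v i) - f (u i))) < e"
    using AC_on_ivlD[OF assms e] by blast
  show "\<exists>d>0. \<forall>x'\<in>{a..b}. dist x' x < d \<longrightarrow> dist (f x') (f x) < e"
  proof (intro exI[of _ d] conjI ballI impI d)
    fix x' assume x': "x' \<in> {a..b}" and dx: "dist x' x < d"
    have "(\<Sum>i<1::nat. norm (f ((\<lambda>_. max x x') i) - f ((\<lambda>_. min x x') i))) < e"
      by (rule H) (use x x' dx in \<open>auto simp: dist_real_def ACfam_def\<close>)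
    then show "dist (f x') (f x) < e"
      by (cases "x \<le> x'") (auto simp: dist_norm norm_minus_commute max_def min_def)
  qed
qed

lemma AC_dom2:
  fixes f :: "real \<Rightarrow> 'a::real_normed_vector" and g :: "real \<Rightarrow> 'b::real_normed_vector"
    and h :: "real \<Rightarrow> 'c::real_normed_vector"
  assumes f: "AC_on_ivl a b f" and g: "AC_on_ivl a b g"
    and dom: "\<And>u v. a \<le> u \<Longrightarrow> u \<le> v \<Longrightarrow> v \<le> b \<Longrightarrow> norm (h v - h u) \<le> C * (norm (f v - f u) + norm (g v - g u))"
  shows "AC_on_ivl a b h"
proof (rule AC_on_ivlI)
  fix e :: real assume e: "e > 0"
  define e' where "e' = e / (2 * (\<bar>C\<bar> + 1))"
  have e': "e' > 0" using e by (simp add: e'_def)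
  obtain d1 where d1: "d1 > 0" and H1: "\<And>n u v. ACfam a b n u v \<Longrightarrow> (\<Sum>i<n. v i - u i) < d1
        \<Longrightarrow> (\<Sum>i<n. norm (f (v i) - f (u i))) < e'"
    using AC_on_ivlD[OF f e'] by blast
  obtain d2 where d2: "d2 > 0" and H2: "\<And>n u v. ACfam a b n u v \<Longrightarrow> (\<Sum>i<n. v i - u i) < d2
        \<Longrightarrow> (\<Sum>i<n. norm (g (v i) - g (u i))) < e'"
    using AC_on_ivlD[OF g e'] by blast
  show "\<exists>d>0. \<forall>n u v. ACfam a b n u v \<and> (\<Sum>i<n. v i - u i) < d
        \<longrightarrow> (\<Sum>i<n. norm (h (v i) - h (u i))) < e"
  proof (intro exI[of _ "min d1 d2"] conjI allI impI)
    show "min d1 d2 > 0" using d1 d2 by simp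
    fix n :: nat and u v :: "nat \<Rightarrow> real"
    assume A: "ACfam a b n u v \<and> (\<Sum>i<n. v i - u i) < min d1 d2"
    have s1: "(\<Sum>i<n. norm (f (v i) - f (u i))) < e'" using A by (intro H1) auto
    have s2: "(\<Sum>i<n. norm (g (v i) - g (u i))) < e'" using A by (intro H2) auto
    have "(\<Sum>i<n. norm (h (v i) - h (u i))) \<le> (\<Sum>i<n. \<bar>C\<bar> * (norm (f (v i) - f (u i)) + norm (g (v i) - g (u i))))"
    proof (rule sum_mono)
      fix i assume "i \<in> {..<n}"
      then have "norm (h (v i) - h (u i)) \<le> C * (norm (f (v i) - f (u i)) + norm (g (v i) - g (u i)))"
        using A by (intro dom) (auto simp: ACfam_def)
      also have "\<dots> \<le> \<bar>C\<bar> * (norm (f (v i) - f (u i)) + norm (g (v i) - g (u i)))"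
        by (intro mult_right_mono) auto
      finally show "norm (h (v i) - h (u i)) \<le> \<bar>C\<bar> * (norm (f (v i) - f (u i)) + norm (g (v i) - g (u i)))" .
    qed
    also have "\<dots> = \<bar>C\<bar> * ((\<Sum>i<n. norm (f (v i) - f (u i))) + (\<Sum>i<n. norm (g (v i) - g (u i))))"
      by (simp add: sum_distrib_left sum.distrib distrib_left)
    also have "\<dots> \<le> \<bar>C\<bar> * (2 * e')"
      using s1 s2 by (intro mult_left_mono) auto
    also have "\<dots> < e"
      using e by (simp add: e'_def field_simps)
    finally show "(\<Sum>i<n. norm (h (v i) - h (u i))) < e" .
  qed
qed

lemma AC_id: "AC_on_ivl a b (\<lambda>x::real. x)"
proof (rule AC_on_ivlI)
  fix e :: real assume "e > 0"
  show "\<exists>d>0. \<forall>n u v. ACfam a b n u v \<and> (\<Sum>i<n. v i - u i) < d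
        \<longrightarrow> (\<Sum>i<n. norm (v i - u i)) < e"
  proof (intro exI[of _ e] conjI allI impI \<open>e>0\<close>)
    fix n u v assume A: "ACfam a b n u v \<and> (\<Sum>i<n. v i - u i) < e"
    have "(\<Sum>i<n. norm (v i - u i)) = (\<Sum>i<n. v i - u i)"
      using A by (intro sum.cong) (auto simp: ACfam_def)
    then show "(\<Sum>i<n. norm (v i - u i)) < e" using A by simp
  qed
qed

lemma AC_dom1:
  fixes f :: "real \<Rightarrow> 'a::real_normed_vector" and h :: "real \<Rightarrow> 'c::real_normed_vector"
  assumes f: "AC_on_ivl a b f"
    and dom: "\<And>u v. a \<le> u \<Longrightarrow> u \<le> v \<Longrightarrow> v \<le> b \<Longrightarrow> norm (h v - h u) \<le> C * norm (f v - f u)"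
  shows "AC_on_ivl a b h"
proof (rule AC_dom2[OF f f, of _ "\<bar>C\<bar>"])
  fix u v assume uv: "a \<le> u" "u \<le> v" "v \<le> b"
  have "norm (h v - h u) \<le> C * norm (f v - f u)" using dom uv .
  also have "\<dots> \<le> \<bar>C\<bar> * norm (f v - f u)" by (intro mult_right_mono) auto
  also have "\<dots> \<le> \<bar>C\<bar> * (norm (f v - f u) + norm (f v - f u))" by (intro mult_left_mono) auto
  finally show "norm (h v - h u) \<le> \<bar>C\<bar> * (norm (f v - f u) + norm (f v - f u))" .
qed

lemma ivl_disjoint_cases:
  fixes c d c' d' :: real
  assumes "c < d" "c' < d'" "{c<..<d} \<inter> {c'<..<d'} = {}"
  shows "d \<le> c' \<or> d' \<le> c"
proof (rule ccontr)
  assume "\<not> (d \<le> c' \<or> d' \<le> c)"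
  then have "(max c c' + min d d') / 2 \<in> {c<..<d} \<inter> {c'<..<d'}"
    using assms by (auto simp: max_def min_def split: if_splits)
  then show False using assms by blast
qed

lemma AC_negligible_image:
  fixes f :: "real \<Rightarrow> real"
  assumes f: "AC_on_ivl a b f" and N: "negligible N" and Nab: "N \<subseteq> {a..b}"
  shows "negligible (f ` N)"
proof (cases "a < b")
  case False
  then have "N \<subseteq> {a}" using Nab by auto
  then have "finite N" using finite_subset by blast
  then show ?thesis by auto
next
  case ab: True
  have contf: "continuous_on {a..b} f" using AC_cont[OF f] .
  show ?thesis unfolding negligible_outer_le
  proof (intro allI impI)
    fix e :: real assume e: "e > 0"
    obtain \<delta> where \<delta>: "\<delta> > 0" and H: "\<And>n u v. ACfam a b n u v \<Longrightarrow> (\<Sum>i<n. v i - u i) < \<delta>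
        \<Longrightarrow> (\<Sum>i<n. norm (f (v i) - f (u i))) < e"
      using AC_on_ivlD[OF f e] by blast
    have Nm: "N \<in> lmeasurable" using N negligible_imp_measurable by blast
    have N0: "measure lebesgue N = 0" using N negligible_imp_measure0 by blast
    have "\<delta>/2 > 0" using \<delta> by simp
    have Nsub: "N \<subseteq> cbox a b" using Nab by simp
    obtain \<D> where D: "countable \<D>"
        "\<And>K. K \<in> \<D> \<Longrightarrow> K \<subseteq> cbox a b \<and> K \<noteq> {} \<and> (\<exists>c d. K = cbox c d)"
        "pairwise (\<lambda>A B. interior A \<inter> interior B = {}) \<D>"
        "\<And>u v. cbox u v \<in> \<D> \<Longrightarrow> \<exists>n. \<forall>i \<in> Basis. v \<bullet> i - u \<bullet> i = (b \<bullet> i - a \<bullet> i)/2^n"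
        "\<And>K. \<lbrakk>K \<in> \<D>; box a b \<noteq> {}\<rbrakk> \<Longrightarrow> interior K \<noteq> {}"
        "N \<subseteq> \<Union>\<D>" "\<Union>\<D> \<in> lmeasurable" "measure lebesgue (\<Union>\<D>) \<le> measure lebesgue N + \<delta>/2"
      using measurable_outer_intervals_bounded[OF Nm Nsub \<open>\<delta>/2 > 0\<close>] by metis
    have boxne: "box a b \<noteq> {}" using ab by simp
    have "\<forall>K\<in>\<D>. \<exists>c d. K = {c..d} \<and> c < d"
    proof
      fix K assume K: "K \<in> \<D>"
      then obtain c d where "K = cbox c d" using D(2) by blast
      then have "K = {c..d}" by simp
      moreover have "interior K \<noteq> {}" using D(5)[OF K boxne] .
      ultimately show "\<exists>c d. K = {c..d} \<and> c < d" by auto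
    qed
    then obtain cc dd where cd: "\<And>K. K \<in> \<D> \<Longrightarrow> K = {cc K..dd K} \<and> cc K < dd K"
      by metis
    have memK: "x \<in> K \<longleftrightarrow> cc K \<le> x \<and> x \<le> dd K" if "K \<in> \<D>" for K x
      using cd[OF that] by (metis atLeastAtMost_iff)
    have Ksub: "K \<subseteq> {a..b}" if "K \<in> \<D>" for K using D(2)[OF that] by simp
    have "\<forall>K\<in>\<D>. \<exists>p\<in>K. \<exists>q\<in>K. \<forall>x\<in>K. f p \<le> f x \<and> f x \<le> f q"
    proof
      fix K assume K: "K \<in> \<D>"
      have cK: "compact K" "K \<noteq> {}" using cd[OF K] by (metis compact_Icc, metis atLeastAtMost_iff less_imp_le empty_iff order_refl)
      have ctK: "continuous_on K f" using contf Ksub[OF K] continuous_on_subset by blast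
      obtain p where "p \<in> K" "\<forall>y\<in>K. f p \<le> f y" using continuous_attains_inf[OF cK ctK] by blast
      moreover obtain q where "q \<in> K" "\<forall>y\<in>K. f y \<le> f q" using continuous_attains_sup[OF cK ctK] by blast
      ultimately show "\<exists>p\<in>K. \<exists>q\<in>K. \<forall>x\<in>K. f p \<le> f x \<and> f x \<le> f q" by blast
    qed
    then obtain p q where pq: "\<And>K. K \<in> \<D> \<Longrightarrow> p K \<in> K \<and> q K \<in> K \<and> (\<forall>x\<in>K. f (p K) \<le> f x \<and> f x \<le> f (q K))"
      by metis
    define A where "A K = {f (p K) .. f (q K)}" for K
    define u where "u K = min (p K) (q K)" for K
    define v where "v K = max (p K) (q K)" for K
    have uvK: "u K \<in> K" "v K \<in> K" "u K \<le> v K" if "K \<in> \<D>" for K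
      using pq[OF that] by (auto simp: u_def v_def min_def max_def)
    have mA: "measure lebesgue (A K) = norm (f (v K) - f (u K))" if "K \<in> \<D>" for K
      using pq[OF that] by (auto simp: A_def u_def v_def min_def max_def)
    have vu_le: "v K - u K \<le> measure lebesgue K" if "K \<in> \<D>" for K
    proof -
      have e1: "K = {cc K..dd K}" and e2: "cc K < dd K" using cd[OF that] by auto
      have "measure lebesgue {cc K..dd K} = dd K - cc K" using e2 by simp
      then have m: "measure lebesgue K = dd K - cc K" using e1 by metis
      have "u K \<in> {cc K..dd K}" "v K \<in> {cc K..dd K}" using uvK[OF that] e1 by metis+
      then have "cc K \<le> u K" "v K \<le> dd K" by auto
      then show ?thesis using m by linarith
    qed
    have sep: "v K \<le> u K' \<or> v K' \<le> u K" if "K \<in> \<D>" "K' \<in> \<D>" "K \<noteq> K'" for K K'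
    proof -
      have "interior K \<inter> interior K' = {}" using D(3) that unfolding pairwise_def by blast
      then have "{cc K<..<dd K} \<inter> {cc K'<..<dd K'} = {}" using cd that by (metis interior_atLeastAtMost_real)
      then have "dd K \<le> cc K' \<or> dd K' \<le> cc K" using ivl_disjoint_cases cd that by blast
      moreover have "v K \<le> dd K" "cc K' \<le> u K'" "v K' \<le> dd K'" "cc K \<le> u K"
        using uvK[OF that(1)] uvK[OF that(2)] cd[OF that(1)] cd[OF that(2)] by auto
      ultimately show ?thesis by linarith
    qed
    have fin_bound: "measure lebesgue (\<Union>K\<in>I. A K) \<le> e" if I: "I \<subseteq> \<D>" "finite I" for I
    proof -
      obtain h where h: "bij_betw h {0..<card I} I" using ex_bij_betw_nat_finite[OF I(2)] by blast
      have hD: "h i \<in> \<D>" if "i < card I" for i using h I(1) that unfolding bij_betw_def by auto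
      have hinj: "h i \<noteq> h j" if "i < card I" "j < card I" "i \<noteq> j" for i j
        using h that unfolding bij_betw_def inj_on_def by auto
      have fam: "ACfam a b (card I) (\<lambda>i. u (h i)) (\<lambda>i. v (h i))"
        unfolding ACfam_def
      proof (intro conjI allI impI)
        fix i assume i: "i < card I"
        have "u (h i) \<in> {a..b}" "v (h i) \<in> {a..b}" using uvK[OF hD[OF i]] Ksub[OF hD[OF i]] by auto
        then show "a \<le> u (h i)" "u (h i) \<le> v (h i)" "v (h i) \<le> b"
          using uvK[OF hD[OF i]] by auto
      next
        fix i j assume "i < card I" "j < card I" "i \<noteq> j"
        then show "v (h i) \<le> u (h j) \<or> v (h j) \<le> u (h i)"
          using sep[OF hD hD hinj] by blast
      qed
      have Im: "K \<in> lmeasurable" if "K \<in> I" for K using cd[of K] that I(1) by (metis subsetD lmeasurable_cbox cbox_interval)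
      have "(\<Sum>i<card I. v (h i) - u (h i)) = (\<Sum>K\<in>I. v K - u K)"
        using sum.reindex_bij_betw[OF h, of "\<lambda>K. v K - u K"] by (simp add: atLeast0LessThan)
      also have "\<dots> \<le> (\<Sum>K\<in>I. measure lebesgue K)"
        using vu_le I(1) by (intro sum_mono) auto
      also have "\<dots> = measure lebesgue (\<Union>I)"
      proof (rule measure_negligible_finite_Union[symmetric, OF I(2) Im])
        show "pairwise (\<lambda>S T. negligible (S \<inter> T)) I"
          unfolding pairwise_def
        proof (intro ballI impI)
          fix K K' assume KK: "K \<in> I" "K' \<in> I" "K \<noteq> K'"
          then have KD: "K \<in> \<D>" "K' \<in> \<D>" using I(1) by auto
          have "interior K \<inter> interior K' = {}" using D(3) KD KK(3) unfolding pairwise_def by blast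
          then have "{cc K<..<dd K} \<inter> {cc K'<..<dd K'} = {}" using cd KD by (metis interior_atLeastAtMost_real)
          then have "dd K \<le> cc K' \<or> dd K' \<le> cc K" using ivl_disjoint_cases cd KD by blast
          then have "K \<inter> K' \<subseteq> {dd K, dd K'}" using memK[OF KD(1)] memK[OF KD(2)] by auto
          then show "negligible (K \<inter> K')" by (rule negligible_subset[rotated]) auto
        qed
      qed auto
      also have "\<dots> \<le> measure lebesgue (\<Union>\<D>)"
      proof (rule measure_mono_fmeasurable)
        show "\<Union>I \<subseteq> \<Union>\<D>" using I(1) by blast
        show "\<Union>I \<in> sets lebesgue" using Im I(2) by (intro sets.finite_Union) (auto intro: fmeasurableD)
      qed (rule D(7))
      also have "\<dots> < \<delta>" using D(8) N0 \<delta> by simp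
      finally have "(\<Sum>i<card I. norm (f (v (h i)) - f (u (h i)))) < e"
        using H[OF fam] by blast
      moreover have "(\<Sum>i<card I. norm (f (v (h i)) - f (u (h i)))) = (\<Sum>K\<in>I. measure lebesgue (A K))"
        using sum.reindex_bij_betw[OF h, of "\<lambda>K. norm (f (v K) - f (u K))"] mA I(1)
        by (simp add: atLeast0LessThan subset_iff)
      moreover have "measure lebesgue (\<Union>K\<in>I. A K) \<le> (\<Sum>K\<in>I. measure lebesgue (A K))"
        by (rule measure_UNION_le[OF I(2)]) (auto simp: A_def)
      ultimately show ?thesis by linarith
    qed
    have T: "(\<Union>K\<in>\<D>. A K) \<in> lmeasurable" "measure lebesgue (\<Union>K\<in>\<D>. A K) \<le> e"
      using fmeasurable_UN_bound[OF D(1) _ fin_bound] measure_UN_bound[OF D(1) _ fin_bound]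
      by (auto simp: A_def)
    have "f ` N \<subseteq> (\<Union>K\<in>\<D>. A K)"
    proof
      fix y assume "y \<in> f ` N"
      then obtain x where x: "x \<in> N" "y = f x" by blast
      then obtain K where "K \<in> \<D>" "x \<in> K" using D(6) by blast
      then show "y \<in> (\<Union>K\<in>\<D>. A K)" using pq x by (auto simp: A_def)
    qed
    then show "\<exists>T. f ` N \<subseteq> T \<and> T \<in> lmeasurable \<and> measure lebesgue T \<le> e"
      using T by blast
  qed
qed

lemma AC_mono_deriv:
  fixes f :: "real \<Rightarrow> real"
  assumes f: "AC_on_ivl a b f" and ab: "a \<le> b" and N: "negligible N"
    and D: "\<And>x. x \<in> {a<..<b} \<Longrightarrow> x \<notin> N \<Longrightarrow> \<exists>d\<ge>0. (f has_real_derivative d) (at x)"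
  shows "f a \<le> f b"
proof (rule ccontr)
  assume "\<not> f a \<le> f b"
  then have fab: "f b < f a" by simp
  then have ab': "a < b" using ab by (cases "a = b") auto
  define \<epsilon> where "\<epsilon> = (f a - f b) / (2 * (b - a))"
  have \<epsilon>: "\<epsilon> > 0" using fab ab' by (simp add: \<epsilon>_def)
  define g where "g x = f x + \<epsilon> * x" for x
  have gab: "g b < g a"
  proof -
    have "b - a \<noteq> 0" using ab' by simp
    then have "\<epsilon> * (2 * (b - a)) = f a - f b" unfolding \<epsilon>_def by simp
    then have e2: "2 * (\<epsilon> * b) - 2 * (\<epsilon> * a) = f a - f b" by (simp add: algebra_simps)
    show ?thesis unfolding g_def using e2 fab by linarith
  qed
  have gAC: "AC_on_ivl a b g"
  proof (rule AC_dom2[OF f AC_id, of _ "1 + \<epsilon>"])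
    fix u v :: real assume "a \<le> u" "u \<le> v" "v \<le> b"
    have "g v - g u = (f v - f u) + \<epsilon> * (v - u)" by (simp add: g_def algebra_simps)
    then have "norm (g v - g u) \<le> norm (f v - f u) + norm (\<epsilon> * (v - u))"
      by (metis norm_triangle_ineq)
    also have "norm (\<epsilon> * (v - u)) = \<epsilon> * norm (v - u)" using \<epsilon> by (simp add: abs_mult)
    finally have "norm (g v - g u) \<le> norm (f v - f u) + \<epsilon> * norm (v - u)" .
    also have "\<dots> \<le> (1 + \<epsilon>) * (norm (f v - f u) + norm (v - u))"
      using \<epsilon> by (simp add: algebra_simps)
    finally show "norm (g v - g u) \<le> (1 + \<epsilon>) * (norm (f v - f u) + norm (v - u))" .
  qed
  have gc: "continuous_on {a..b} g" using AC_cont[OF gAC] .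
  have sub: "{g b<..<g a} \<subseteq> g ` (N \<inter> {a..b})"
  proof
    fix y assume y: "y \<in> {g b<..<g a}"
    define S where "S = {t \<in> {a..b}. g t = y}"
    have Sne: "S \<noteq> {}" using IVT2'[of g b y a, OF _ _ ab gc] y by (auto simp: S_def)
    have Scl: "closed S" unfolding S_def by (rule continuous_closed_preimage_constant[OF gc]) auto
    have Sbd: "bdd_above S" unfolding S_def by (rule bdd_aboveI[of _ b]) auto
    define x where "x = Sup S"
    have xS: "x \<in> S" using closed_contains_Sup[OF Sne Sbd Scl] by (simp add: x_def)
    have above: "t \<le> x" if "t \<in> S" for t using cSup_upper[OF that Sbd] by (simp add: x_def)
    have xab: "a < x" "x < b" using xS y by (auto simp: S_def less_le)
    have "x \<in> N"
    proof (rule ccontr)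
      assume "x \<notin> N"
      then obtain d where d: "d \<ge> 0" "(f has_real_derivative d) (at x)" using D xab by auto
      have gd: "(g has_real_derivative d + \<epsilon>) (at x)"
        unfolding g_def using d(2) by (auto intro!: derivative_eq_intros)
      then obtain \<delta> where \<delta>: "\<delta> > 0" "\<And>h. h > 0 \<Longrightarrow> h < \<delta> \<Longrightarrow> g x < g (x + h)"
        using DERIV_pos_inc_right[OF gd] d(1) \<epsilon> by auto
      define m where "m = min (\<delta>/2) ((b - x)/2)"
      define t where "t = x + m"
      have m1: "m > 0" using \<delta> xab by (auto simp: m_def)
      have m2: "m \<le> (b - x)/2" unfolding m_def by (rule min.cobounded2)
      have m3: "m < \<delta>" using \<delta> unfolding m_def by argo
      have t1: "x < t" unfolding t_def using m1 by linarith
      have t2: "t < b" unfolding t_def using xab m2 by argo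
      note t = t1 t2
      have "g x < g t" unfolding t_def using m1 m3 by (intro \<delta>(2)) auto
      then have gt: "y < g t" using xS by (simp add: S_def)
      have "continuous_on {t..b} g" using gc t xab by (auto intro: continuous_on_subset)
      then obtain s where s: "t \<le> s" "s \<le> b" "g s = y"
        using IVT2'[of g b y t] gt y t by fastforce
      then have "s \<in> S" using t xab by (auto simp: S_def)
      then show False using above s t by fastforce
    qed
    then show "y \<in> g ` (N \<inter> {a..b})" using xS by (auto simp: S_def)
  qed
  have "negligible (g ` (N \<inter> {a..b}))"
    using AC_negligible_image[OF gAC _ ] N by (meson inf_le2 negligible_subset inf_le1)
  then have "negligible {g b<..<g a}" using sub negligible_subset by blast
  then have "box (g b) (g a) = {}" by (metis box_real(1) negligible_interval(2))
  then show False using gab by simp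
qed

lemma AC_const_deriv_real:
  fixes f :: "real \<Rightarrow> real"
  assumes f: "AC_on_ivl a b f" and ab: "a \<le> b" and N: "negligible N"
    and D: "\<And>x. x \<in> {a<..<b} \<Longrightarrow> x \<notin> N \<Longrightarrow> (f has_real_derivative 0) (at x)"
  shows "f a = f b"
proof -
  have "f a \<le> f b" using AC_mono_deriv[OF f ab N] D by blast
  moreover have "AC_on_ivl a b (\<lambda>x. - f x)" by (rule AC_dom1[OF f, of _ 1]) (simp add: norm_minus_commute abs_minus_commute)
  then have "- f a \<le> - f b" using AC_mono_deriv[OF _ ab N, of "\<lambda>x. - f x"] D
    by (metis DERIV_minus minus_zero order_refl)
  ultimately show ?thesis by simp
qed

lemma AC_bounded:
  fixes f :: "real \<Rightarrow> 'a::real_normed_vector"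
  assumes "AC_on_ivl a b f"
  obtains M where "M > 0" "\<And>x. x \<in> {a..b} \<Longrightarrow> norm (f x) \<le> M"
proof -
  have "compact (f ` {a..b})" by (rule compact_continuous_image[OF AC_cont[OF assms]]) simp
  then have "bounded (f ` {a..b})" by (rule compact_imp_bounded)
  then obtain M where M: "M > 0" "\<And>y. y \<in> f ` {a..b} \<Longrightarrow> norm y \<le> M" by (meson bounded_pos)
  show ?thesis using M that by blast
qed

lemma AC_mult:
  fixes f g :: "real \<Rightarrow> 'a::real_normed_algebra"
  assumes f: "AC_on_ivl a b f" and g: "AC_on_ivl a b g"
  shows "AC_on_ivl a b (\<lambda>x. f x * g x)"
proof -
  obtain M1 where M1: "M1 > 0" "\<And>x. x \<in> {a..b} \<Longrightarrow> norm (f x) \<le> M1" using AC_bounded[OF f] by blast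
  obtain M2 where M2: "M2 > 0" "\<And>x. x \<in> {a..b} \<Longrightarrow> norm (g x) \<le> M2" using AC_bounded[OF g] by blast
  show ?thesis
  proof (rule AC_dom2[OF f g, of _ "M1 + M2"])
    fix u v assume uv: "a \<le> u" "u \<le> v" "v \<le> b"
    have "f v * g v - f u * g u = f v * (g v - g u) + (f v - f u) * g u" by (simp add: algebra_simps)
    then have "norm (f v * g v - f u * g u) \<le> norm (f v * (g v - g u)) + norm ((f v - f u) * g u)"
      by (metis norm_triangle_ineq)
    also have "\<dots> \<le> norm (f v) * norm (g v - g u) + norm (f v - f u) * norm (g u)"
      by (intro add_mono norm_mult_ineq)
    also have "\<dots> \<le> M1 * norm (g v - g u) + norm (f v - f u) * M2"
      using uv M1 M2 by (intro add_mono mult_right_mono mult_left_mono) auto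
    also have "\<dots> \<le> (M1 + M2) * (norm (f v - f u) + norm (g v - g u))"
      using M1 M2 by (simp add: algebra_simps)
    finally show "norm (f v * g v - f u * g u) \<le> (M1 + M2) * (norm (f v - f u) + norm (g v - g u))" .
  qed
qed

lemma AC_add:
  fixes f g :: "real \<Rightarrow> 'a::real_normed_vector"
  assumes f: "AC_on_ivl a b f" and g: "AC_on_ivl a b g"
  shows "AC_on_ivl a b (\<lambda>x. f x + g x)"
proof (rule AC_dom2[OF f g, of _ 1])
  fix u v :: real
  have "f v + g v - (f u + g u) = (f v - f u) + (g v - g u)" by (simp add: algebra_simps)
  then show "norm (f v + g v - (f u + g u)) \<le> 1 * (norm (f v - f u) + norm (g v - g u))"
    by (metis norm_triangle_ineq mult_1)
qed

lemma AC_Pair: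
  fixes f :: "real \<Rightarrow> 'a::real_normed_vector" and g :: "real \<Rightarrow> 'b::real_normed_vector"
  assumes f: "AC_on_ivl a b f" and g: "AC_on_ivl a b g"
  shows "AC_on_ivl a b (\<lambda>x. (f x, g x))"
proof (rule AC_dom2[OF f g, of _ 1])
  fix u v :: real
  show "norm ((f v, g v) - (f u, g u)) \<le> 1 * (norm (f v - f u) + norm (g v - g u))"
    using norm_Pair_le[of "f v - f u" "g v - g u"] by simp
qed

lemma AC_blin:
  fixes f :: "real \<Rightarrow> 'a::real_normed_vector" and T :: "'a \<Rightarrow> 'b::real_normed_vector"
  assumes f: "AC_on_ivl a b f" and T: "bounded_linear T"
  shows "AC_on_ivl a b (\<lambda>x. T (f x))"
proof -
  obtain K where K: "\<And>x. norm (T x) \<le> norm x * K" using bounded_linear.bounded[OF T] by blast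
  show ?thesis
  proof (rule AC_dom1[OF f, of _ K])
    fix u v :: real
    have "T (f v) - T (f u) = T (f v - f u)" by (simp add: linear_diff[OF bounded_linear.linear[OF T]])
    then show "norm (T (f v) - T (f u)) \<le> K * norm (f v - f u)" using K[of "f v - f u"] by (simp add: mult.commute)
  qed
qed

lemma AC_fst: "AC_on_ivl a b f \<Longrightarrow> AC_on_ivl a b (\<lambda>x. fst (f x))"
  by (rule AC_blin[OF _ bounded_linear_fst])
lemma AC_snd: "AC_on_ivl a b f \<Longrightarrow> AC_on_ivl a b (\<lambda>x. snd (f x))"
  by (rule AC_blin[OF _ bounded_linear_snd])
lemma AC_cnj: "AC_on_ivl a b f \<Longrightarrow> AC_on_ivl a b (\<lambda>x. cnj (f x))"
  by (rule AC_blin[OF _ bounded_linear_cnj])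
lemma AC_Re: "AC_on_ivl a b f \<Longrightarrow> AC_on_ivl a b (\<lambda>x. Re (f x))"
  by (rule AC_blin[OF _ bounded_linear_Re])
lemma AC_Im: "AC_on_ivl a b f \<Longrightarrow> AC_on_ivl a b (\<lambda>x. Im (f x))"
  by (rule AC_blin[OF _ bounded_linear_Im])
lemma AC_of_real: "AC_on_ivl a b f \<Longrightarrow> AC_on_ivl a b (\<lambda>x. complex_of_real (f x))"
  by (rule AC_blin[OF _ bounded_linear_of_real])
lemma AC_minus: "AC_on_ivl a b f \<Longrightarrow> AC_on_ivl a b (\<lambda>x. - f x)"
  by (rule AC_blin[OF _ bounded_linear_minus[OF bounded_linear_ident]])
lemma AC_const: "AC_on_ivl a b (\<lambda>x. c)"
  by (rule AC_dom1[where f="\<lambda>x. x" and h="\<lambda>x. c" and C=0]) (simp_all add: AC_id)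

lemma AC_empty:
  assumes "\<not> a \<le> b"
  shows "AC_on_ivl a b f"
proof (rule AC_on_ivlI)
  fix e :: real assume e: "e > 0"
  show "\<exists>d>0. \<forall>n u v. ACfam a b n u v \<and> (\<Sum>i<n. v i - u i) < d
        \<longrightarrow> (\<Sum>i<n. norm (f (v i) - f (u i))) < e"
  proof (intro exI[of _ 1] conjI allI impI)
    fix n u v assume A: "ACfam a b n u v \<and> (\<Sum>i<n. v i - u i) < 1"
    have "n = 0"
    proof (rule ccontr)
      assume "n \<noteq> 0"
      then have "0 < n" by simp
      moreover have B: "\<forall>i<n. a \<le> u i \<and> u i \<le> v i \<and> v i \<le> b" using A unfolding ACfam_def by blast
      ultimately have "a \<le> u 0 \<and> u 0 \<le> v 0 \<and> v 0 \<le> b" by blast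
      then show False using assms by linarith
    qed
    then show "(\<Sum>i<n. norm (f (v i) - f (u i))) < e" using e by simp
  qed simp
qed

lemma AC_inverse:
  fixes f :: "real \<Rightarrow> real"
  assumes f: "AC_on_ivl a b f" and pos: "\<And>x. x \<in> {a..b} \<Longrightarrow> f x > 0"
  shows "AC_on_ivl a b (\<lambda>x. 1 / f x)"
proof (cases "a \<le> b")
  case False
  then show ?thesis by (rule AC_empty)
next
  case True
  have ne: "{a..b} \<noteq> {}" using True by simp
  obtain p where p: "p \<in> {a..b}" "\<And>y. y \<in> {a..b} \<Longrightarrow> f p \<le> f y"
    using continuous_attains_inf[OF compact_Icc ne AC_cont[OF f]] by blast
  define m where "m = f p"
  have m: "m > 0" using pos p by (simp add: m_def)
  show ?thesis
  proof (rule AC_dom1[OF f, of _ "1 / m^2"])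
    fix u v assume uv: "a \<le> u" "u \<le> v" "v \<le> b"
    have fu: "f u \<ge> m" "f v \<ge> m" using p uv by (auto simp: m_def)
    have "1 / f v - 1 / f u = (f u - f v) / (f u * f v)" using fu m by (simp add: field_simps)
    then have "norm (1 / f v - 1 / f u) = \<bar>f v - f u\<bar> / (f u * f v)" using fu m by (simp add: abs_minus_commute)
    also have "\<dots> \<le> \<bar>f v - f u\<bar> / m^2"
    proof (rule divide_left_mono)
      have "m * m \<le> f u * f v" by (rule mult_mono) (use fu m in auto)
      then show "m^2 \<le> f u * f v" by (simp add: power2_eq_square)
      show "0 \<le> \<bar>f v - f u\<bar>" by simp
      show "0 < f u * f v * m^2" using fu m by simp
    qed
    finally show "norm (1 / f v - 1 / f u) \<le> 1 / m^2 * norm (f v - f u)" by simp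
  qed
qed

lemma AC_smooth:
  fixes f :: "real \<Rightarrow> real"
  assumes d: "\<And>x. (f has_real_derivative f' x) (at x)" and B: "\<And>x. x \<in> {a..b} \<Longrightarrow> \<bar>f' x\<bar> \<le> B"
  shows "AC_on_ivl a b f"
proof (rule AC_dom1[where f="\<lambda>x. x" and h=f and C=B, OF AC_id])
  fix u v assume uv: "a \<le> u" "u \<le> v" "v \<le> b"
  show "norm (f v - f u) \<le> B * norm (v - u)"
  proof (cases "u = v")
    case True then show ?thesis by simp
  next
    case False
    then have "u < v" using uv by simp
    then obtain t where t: "u < t" "t < v" "f v - f u = (v - u) * f' t"
      using MVT2[of u v f f'] d by blast
    have "\<bar>f' t\<bar> \<le> B" using B t uv by auto
    then show ?thesis using t \<open>u < v\<close> by (simp add: abs_mult mult.commute mult_left_mono)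
  qed
qed

lemma AC_const_deriv:
  fixes f :: "real \<Rightarrow> complex"
  assumes f: "AC_on_ivl a b f" and ab: "a \<le> b" and N: "negligible N"
    and D: "\<And>x. x \<in> {a<..<b} \<Longrightarrow> x \<notin> N \<Longrightarrow> (f has_vector_derivative 0) (at x)"
  shows "f a = f b"
proof -
  have "Re (f a) = Re (f b)"
    by (rule AC_const_deriv_real[OF AC_Re[OF f] ab N]) (metis D has_field_derivative_Re zero_complex.sel(1))
  moreover have "Im (f a) = Im (f b)"
    by (rule AC_const_deriv_real[OF AC_Im[OF f] ab N]) (metis D has_field_derivative_Im zero_complex.sel(2))
  ultimately show ?thesis by (simp add: complex_eq_iff)
qed

lemma AC_loc_const:
  fixes f :: "real \<Rightarrow> complex"
  assumes f: "AC_loc f" and N: "negligible N"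
    and D: "\<And>x. x \<notin> N \<Longrightarrow> (f has_vector_derivative 0) (at x)"
  shows "f x = f y"
proof -
  have *: "f a = f b" if "a \<le> b" for a b
  proof -
    have fab: "AC_on_ivl a b f" using f unfolding AC_loc_def by (elim allE)
    show ?thesis by (rule AC_const_deriv[OF fab that N]) (simp add: D)
  qed
  show ?thesis
  proof (cases "x \<le> y")
    case True then show ?thesis using *[of x y] by blast
  next
    case False then have "y \<le> x" by simp
    then show ?thesis using *[of y x] by simp
  qed
qed

lemma AE_lborel_null:
  assumes "AE x in lborel. P x"
  obtains N where "N \<in> null_sets lborel" "\<And>x. x \<notin> N \<Longrightarrow> P x"
  using AE_E3[OF assms] by auto

lemma null_lborel_negligible: "N \<in> null_sets lborel \<Longrightarrow> negligible N"
  unfolding negligible_iff_null_sets by (rule null_sets_completionI)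

lemma not_AE_False: "\<not> (AE x in (lborel :: real measure). False)"
proof
  assume "AE x in (lborel :: real measure). False"
  then have "ae_filter (lborel :: real measure) = bot" by (simp add: eventually_False)
  then show False using ae_filter_eq_bot_iff[of "lborel :: real measure"] by simp
qed

lemma integrable_const_lborel:
  fixes w :: complex
  assumes "integrable (lborel :: real measure) (\<lambda>x. w)"
  shows "w = 0"
proof (rule ccontr)
  assume "w \<noteq> 0"
  have "(\<integral>\<^sup>+x. ennreal (norm w) \<partial>(lborel :: real measure)) = ennreal (norm w) * \<infinity>"
    by (simp add: nn_integral_const)
  also have "\<dots> = \<infinity>" using \<open>w \<noteq> 0\<close> by (simp add: ennreal_mult_top)
  finally show False using assms unfolding integrable_iff_bounded by simp
qed

definition odeR :: "(real \<Rightarrow> complex) \<Rightarrow> complex \<Rightarrow> (real \<Rightarrow> complex \<times> complex) \<Rightarrow> real \<Rightarrow> complex \<times> complex" where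
  "odeR r z F x = (r x * snd (F x) - \<i> * z * fst (F x), \<i> * z * snd (F x) - cnj (r x) * fst (F x))"

lemma i_mult_eq_iff: "\<i> * a = b \<longleftrightarrow> a = - \<i> * b"
proof
  assume "\<i> * a = b" then show "a = - \<i> * b" by (auto simp: algebra_simps)
next
  assume "a = - \<i> * b" then show "\<i> * a = b" by (auto simp: algebra_simps)
qed

lemma Mop_eq_iff: "Mop r F x d = cscale z (F x) \<longleftrightarrow> d = odeR r z F x"
proof -
  obtain d1 d2 where d: "d = (d1, d2)" by (cases d)
  have "Mop r F x d = cscale z (F x) \<longleftrightarrow>
     (\<i> * (d1 - r x * snd (F x)) = z * fst (F x) \<and> \<i> * (- cnj (r x) * fst (F x) - d2) = z * snd (F x))"
    by (simp add: Mop_def cscale_def d)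
  also have "\<dots> \<longleftrightarrow> (d1 - r x * snd (F x) = - \<i> * (z * fst (F x)) \<and> - cnj (r x) * fst (F x) - d2 = - \<i> * (z * snd (F x)))"
    by (simp only: i_mult_eq_iff)
  also have "\<dots> \<longleftrightarrow> d = odeR r z F x"
    by (auto simp: d odeR_def algebra_simps)
  finally show ?thesis .
qed

lemma graph_iff: "D_graph r F (\<lambda>x. cscale z (F x)) \<longleftrightarrow> L2 F \<and> AC_loc F \<and> L2 (\<lambda>x. cscale z (F x)) \<and>
   (AE x in lborel. (F has_vector_derivative odeR r z F x) (at x))"
  unfolding D_graph_def Mop_eq_iff by (simp del: split_paired_Ex)

lemma wave_sol:
  assumes "wave_function q z \<Psi>"
  shows "AE x in lborel. (\<Psi> has_vector_derivative odeR q z \<Psi> x) (at x)"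
proof -
  have "AE x in lborel. \<exists>d. (\<Psi> has_vector_derivative d) (at x) \<and>
         d = (- \<i> * z * fst (\<Psi> x) + q x * snd (\<Psi> x), \<i> * z * snd (\<Psi> x) - cnj (q x) * fst (\<Psi> x))"
    using assms unfolding wave_function_def by blast
  then show ?thesis
  proof (rule eventually_mono)
    fix x assume "\<exists>d. (\<Psi> has_vector_derivative d) (at x) \<and>
         d = (- \<i> * z * fst (\<Psi> x) + q x * snd (\<Psi> x), \<i> * z * snd (\<Psi> x) - cnj (q x) * fst (\<Psi> x))"
    then obtain d where d: "(\<Psi> has_vector_derivative d) (at x)"
      "d = (- \<i> * z * fst (\<Psi> x) + q x * snd (\<Psi> x), \<i> * z * snd (\<Psi> x) - cnj (q x) * fst (\<Psi> x))" by blast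
    have "odeR q z \<Psi> x = (- \<i> * z * fst (\<Psi> x) + q x * snd (\<Psi> x), \<i> * z * snd (\<Psi> x) - cnj (q x) * fst (\<Psi> x))"
      by (simp add: odeR_def)
    then show "(\<Psi> has_vector_derivative odeR q z \<Psi> x) (at x)" using d by simp
  qed
qed

lemma has_vector_derivative_fst':
  "(F has_vector_derivative d) (at x) \<Longrightarrow> ((\<lambda>x. fst (F x)) has_vector_derivative fst d) (at x)"
  by (rule bounded_linear.has_vector_derivative[OF bounded_linear_fst])
lemma has_vector_derivative_snd':
  "(F has_vector_derivative d) (at x) \<Longrightarrow> ((\<lambda>x. snd (F x)) has_vector_derivative snd d) (at x)"
  by (rule bounded_linear.has_vector_derivative[OF bounded_linear_snd])

lemma AC_diff:
  fixes f g :: "real \<Rightarrow> 'a::real_normed_vector"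
  assumes f: "AC_on_ivl a b f" and g: "AC_on_ivl a b g"
  shows "AC_on_ivl a b (\<lambda>x. f x - g x)"
proof (rule AC_dom2[OF f g, of _ 1])
  fix u v :: real
  have "f v - g v - (f u - g u) = (f v - f u) - (g v - g u)" by (simp add: algebra_simps)
  then show "norm (f v - g v - (f u - g u)) \<le> 1 * (norm (f v - f u) + norm (g v - g u))"
    by (metis norm_triangle_ineq4 mult_1)
qed

definition wr :: "(real \<Rightarrow> complex \<times> complex) \<Rightarrow> (real \<Rightarrow> complex \<times> complex) \<Rightarrow> real \<Rightarrow> complex" where
  "wr F G x = fst (F x) * snd (G x) - snd (F x) * fst (G x)"

lemma wronskian_const:
  assumes F: "AC_loc F" and G: "AC_loc G"
    and dF: "AE x in lborel. (F has_vector_derivative odeR r z F x) (at x)"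
    and dG: "AE x in lborel. (G has_vector_derivative odeR r z G x) (at x)"
  shows "wr F G x = wr F G y"
proof -
  obtain N1 where N1: "N1 \<in> null_sets lborel" "\<And>x. x \<notin> N1 \<Longrightarrow> (F has_vector_derivative odeR r z F x) (at x)"
    using AE_lborel_null[OF dF] by blast
  obtain N2 where N2: "N2 \<in> null_sets lborel" "\<And>x. x \<notin> N2 \<Longrightarrow> (G has_vector_derivative odeR r z G x) (at x)"
    using AE_lborel_null[OF dG] by blast
  have negl: "negligible (N1 \<union> N2)" using N1(1) N2(1) null_lborel_negligible by blast
  have AC: "AC_loc (wr F G)" unfolding AC_loc_def wr_def
  proof (intro allI)
    fix a b
    have Fa: "AC_on_ivl a b F" and Ga: "AC_on_ivl a b G" using F G unfolding AC_loc_def by auto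
    show "AC_on_ivl a b (\<lambda>x. fst (F x) * snd (G x) - snd (F x) * fst (G x))"
      by (intro AC_diff AC_mult AC_fst AC_snd Fa Ga)
  qed
  have D: "(wr F G has_vector_derivative 0) (at t)" if t: "t \<notin> N1 \<union> N2" for t
  proof -
    have fd: "(F has_vector_derivative odeR r z F t) (at t)" using N1(2) t by blast
    have gd: "(G has_vector_derivative odeR r z G t) (at t)" using N2(2) t by blast
    have "(wr F G has_vector_derivative
       (fst (F t) * snd (odeR r z G t) + fst (odeR r z F t) * snd (G t)) -
       (snd (F t) * fst (odeR r z G t) + snd (odeR r z F t) * fst (G t))) (at t)"
      unfolding wr_def
      by (intro has_vector_derivative_diff has_vector_derivative_mult has_vector_derivative_fst' has_vector_derivative_snd' fd gd)
    moreover have "(fst (F t) * snd (odeR r z G t) + fst (odeR r z F t) * snd (G t)) -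
       (snd (F t) * fst (odeR r z G t) + snd (odeR r z F t) * fst (G t)) = 0"
      by (simp add: odeR_def algebra_simps)
    ultimately show ?thesis by simp
  qed
  show ?thesis by (rule AC_loc_const[OF AC negl D])
qed

lemma K_sol:
  assumes "(F has_vector_derivative odeR r z F x) (at x)"
  shows "((\<lambda>x. Kop (F x)) has_vector_derivative odeR r (cnj z) (\<lambda>x. Kop (F x)) x) (at x)"
proof -
  have "((\<lambda>x. Kop (F x)) has_vector_derivative (cnj (snd (odeR r z F x)), - cnj (fst (odeR r z F x)))) (at x)"
    unfolding Kop_def
    by (intro has_vector_derivative_Pair has_vector_derivative_cnj has_vector_derivative_minus
         has_vector_derivative_fst' has_vector_derivative_snd' assms)
  moreover have "(cnj (snd (odeR r z F x)), - cnj (fst (odeR r z F x))) = odeR r (cnj z) (\<lambda>x. Kop (F x)) x"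
    by (simp add: odeR_def Kop_def algebra_simps)
  ultimately show ?thesis by simp
qed

lemma norm_pair_sq: "(norm (v :: complex \<times> complex))^2 = (cmod (fst v))^2 + (cmod (snd v))^2"
  by (cases v) (simp add: norm_Pair)

lemma norm_cscale_sq: "(norm (cscale c v))^2 = (cmod c)^2 * (norm v)^2"
  by (simp add: norm_pair_sq cscale_def norm_mult power_mult_distrib algebra_simps)

lemma norm_Kop: "norm (Kop v) = norm v"
proof -
  have "(norm (Kop v))^2 = (norm v)^2" by (simp add: norm_pair_sq Kop_def add.commute)
  then show ?thesis by (simp add: power2_eq_iff_nonneg)
qed

lemma cont_cscale: "continuous_on UNIV (cscale c)"
  unfolding cscale_def by (intro continuous_intros)
lemma cont_Kop: "continuous_on UNIV Kop"
  unfolding Kop_def by (intro continuous_intros)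

lemma L2_cscale:
  assumes "L2 F"
  shows "L2 (\<lambda>x. cscale c (F x))"
proof -
  have m: "F \<in> borel_measurable lborel" and i: "integrable lborel (\<lambda>x. (norm (F x))\<^sup>2)"
    using assms unfolding L2_def by auto
  have "(\<lambda>x. cscale c (F x)) \<in> borel_measurable lborel"
    by (rule measurable_compose[OF m borel_measurable_continuous_onI[OF cont_cscale]])
  moreover have "integrable lborel (\<lambda>x. (cmod c)^2 * (norm (F x))\<^sup>2)" using i by simp
  ultimately show ?thesis unfolding L2_def norm_cscale_sq by simp
qed

lemma L2_Kop:
  assumes "L2 F"
  shows "L2 (\<lambda>x. Kop (F x))"
proof -
  have m: "F \<in> borel_measurable lborel" and i: "integrable lborel (\<lambda>x. (norm (F x))\<^sup>2)"
    using assms unfolding L2_def by auto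
  have "(\<lambda>x. Kop (F x)) \<in> borel_measurable lborel"
    by (rule measurable_compose[OF m borel_measurable_continuous_onI[OF cont_Kop]])
  then show ?thesis using i unfolding L2_def norm_Kop by simp
qed

lemma AC_loc_Kop: "AC_loc F \<Longrightarrow> AC_loc (\<lambda>x. Kop (F x))"
  unfolding AC_loc_def Kop_def by (intro allI AC_Pair AC_cnj AC_minus AC_fst AC_snd) auto

lemma Kop_Kop: "Kop (Kop v) = - v"
  by (cases v) (simp add: Kop_def)

lemma Kop_cscale: "Kop (cscale c v) = cscale (cnj c) (Kop v)"
  by (simp add: Kop_def cscale_def)

lemma graph_K:
  assumes "D_graph r F (\<lambda>x. cscale z (F x))"
  shows "D_graph r (\<lambda>x. Kop (F x)) (\<lambda>x. cscale (cnj z) (Kop (F x)))"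
proof -
  have A: "L2 F" "AC_loc F" "AE x in lborel. (F has_vector_derivative odeR r z F x) (at x)"
    using assms unfolding graph_iff by auto
  have "AE x in lborel. ((\<lambda>x. Kop (F x)) has_vector_derivative odeR r (cnj z) (\<lambda>x. Kop (F x)) x) (at x)"
    using A(3) by (rule eventually_mono) (rule K_sol)
  then show ?thesis unfolding graph_iff using L2_Kop[OF A(1)] L2_cscale[OF L2_Kop[OF A(1)]] AC_loc_Kop[OF A(2)]
    by simp
qed

lemma Re_mult_cnj_sq: "Re (w * cnj w) = (cmod w)^2"
  using cmod_power2[of w] by (simp add: power2_eq_square)

lemma of_real_Re_mult_cnj: "complex_of_real (Re (a * cnj a + b * cnj b)) = a * cnj a + b * cnj b"
  by (simp add: complex_eq_iff)

lemma pos_of_nonzero: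
  assumes "v \<noteq> (0 :: complex \<times> complex)"
  shows "Re (fst v * cnj (fst v) + snd v * cnj (snd v)) > 0"
proof -
  have "fst v \<noteq> 0 \<or> snd v \<noteq> 0" using assms by (cases v) (auto simp: zero_prod_def)
  then show ?thesis unfolding Re_mult_cnj_sq plus_complex.sel
    by (auto simp: add_pos_nonneg add_nonneg_pos)
qed

lemma simple_from_wronskian:
  assumes F: "AC_loc F" and G: "AC_loc G"
    and dF: "AE x in lborel. (F has_vector_derivative odeR r z F x) (at x)"
    and dG: "AE x in lborel. (G has_vector_derivative odeR r z G x) (at x)"
    and Fnz: "\<And>x. F x \<noteq> 0"
    and W: "\<And>x. wr F G x = 0"
  shows "\<exists>k. \<forall>x. G x = cscale k (F x)"
proof -
  obtain N1 where N1: "N1 \<in> null_sets lborel" "\<And>x. x \<notin> N1 \<Longrightarrow> (F has_vector_derivative odeR r z F x) (at x)"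
    using AE_lborel_null[OF dF] by blast
  obtain N2 where N2: "N2 \<in> null_sets lborel" "\<And>x. x \<notin> N2 \<Longrightarrow> (G has_vector_derivative odeR r z G x) (at x)"
    using AE_lborel_null[OF dG] by blast
  have negl: "negligible (N1 \<union> N2)" using N1(1) N2(1) null_lborel_negligible by blast
  define P where "P x = Re (fst (F x) * cnj (fst (F x)) + snd (F x) * cnj (snd (F x)))" for x
  define num where "num x = fst (G x) * cnj (fst (F x)) + snd (G x) * cnj (snd (F x))" for x
  define k where "k x = num x * complex_of_real (inverse (P x))" for x
  have Ppos: "P x > 0" for x unfolding P_def by (rule pos_of_nonzero[OF Fnz])
  have ofP: "complex_of_real (P x) = fst (F x) * cnj (fst (F x)) + snd (F x) * cnj (snd (F x))" for x
    unfolding P_def by (rule of_real_Re_mult_cnj)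
  have Gk1: "fst (G x) = k x * fst (F x)" and Gk2: "snd (G x) = k x * snd (F x)" for x
  proof -
    have w: "fst (F x) * snd (G x) = snd (F x) * fst (G x)" using W[of x] by (simp add: wr_def)
    have n1: "num x * fst (F x) = fst (G x) * complex_of_real (P x)"
      unfolding ofP num_def using w by algebra
    have n2: "num x * snd (F x) = snd (G x) * complex_of_real (P x)"
      unfolding ofP num_def using w by algebra
    have Pnz: "complex_of_real (P x) \<noteq> 0" using Ppos[of x] by simp
    show "fst (G x) = k x * fst (F x)"
      using n1 Pnz unfolding k_def by (simp add: of_real_inverse field_simps)
    show "snd (G x) = k x * snd (F x)"
      using n2 Pnz unfolding k_def by (simp add: of_real_inverse field_simps)
  qed
  have ACk: "AC_loc k" unfolding AC_loc_def
  proof (intro allI)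
    fix a b
    have Fa: "AC_on_ivl a b F" and Ga: "AC_on_ivl a b G" using F G unfolding AC_loc_def by auto
    have ACP: "AC_on_ivl a b P" unfolding P_def
      by (intro AC_Re AC_add AC_mult AC_cnj AC_fst AC_snd Fa)
    have "AC_on_ivl a b (\<lambda>x. 1 / P x)" by (rule AC_inverse[OF ACP Ppos])
    then have "AC_on_ivl a b (\<lambda>x. inverse (P x))" by (simp add: inverse_eq_divide)
    then show "AC_on_ivl a b k" unfolding k_def num_def
      by (intro AC_mult AC_add AC_cnj AC_fst AC_snd AC_of_real Fa Ga)
  qed
  have Dk: "(k has_vector_derivative 0) (at t)" if t: "t \<notin> N1 \<union> N2" for t
  proof -
    have fd: "(F has_vector_derivative odeR r z F t) (at t)" using N1(2) t by blast
    have gd: "(G has_vector_derivative odeR r z G t) (at t)" using N2(2) t by blast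
    note n'0 = has_vector_derivative_add[OF
        has_vector_derivative_mult[OF has_vector_derivative_fst'[OF gd] has_vector_derivative_cnj[OF has_vector_derivative_fst'[OF fd]]]
        has_vector_derivative_mult[OF has_vector_derivative_snd'[OF gd] has_vector_derivative_cnj[OF has_vector_derivative_snd'[OF fd]]]]
    have "\<exists>n'. (num has_vector_derivative n') (at t)"
      unfolding num_def using n'0 by blast
    then obtain n' where n': "(num has_vector_derivative n') (at t)" by blast
    note p'0 = has_field_derivative_Re[OF has_vector_derivative_add[OF
        has_vector_derivative_mult[OF has_vector_derivative_fst'[OF fd] has_vector_derivative_cnj[OF has_vector_derivative_fst'[OF fd]]]
        has_vector_derivative_mult[OF has_vector_derivative_snd'[OF fd] has_vector_derivative_cnj[OF has_vector_derivative_snd'[OF fd]]]]]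
    have "\<exists>p'. (P has_real_derivative p') (at t)"
      unfolding P_def using p'0 by blast
    then obtain p' where p': "(P has_real_derivative p') (at t)" by blast
    have ip: "((\<lambda>x. inverse (P x)) has_real_derivative (- (p' * inverse (P t ^ Suc (Suc 0))))) (at t)"
      by (rule DERIV_inverse_fun[OF p']) (use Ppos[of t] in simp)
    have "\<exists>D. (k has_vector_derivative D) (at t)"
      unfolding k_def
      by (rule exI, rule has_vector_derivative_mult[OF n' has_vector_derivative_of_real[OF ip]])
    then obtain D where D: "(k has_vector_derivative D) (at t)" by blast
    have kF1: "((\<lambda>x. k x * fst (F x)) has_vector_derivative (k t * fst (odeR r z F t) + D * fst (F t))) (at t)"
      by (intro has_vector_derivative_mult D has_vector_derivative_fst' fd)
    have kF2: "((\<lambda>x. k x * snd (F x)) has_vector_derivative (k t * snd (odeR r z F t) + D * snd (F t))) (at t)"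
      by (intro has_vector_derivative_mult D has_vector_derivative_snd' fd)
    have eq1: "(\<lambda>x. k x * fst (F x)) = (\<lambda>x. fst (G x))" using Gk1 by auto
    have eq2: "(\<lambda>x. k x * snd (F x)) = (\<lambda>x. snd (G x))" using Gk2 by auto
    have g1: "((\<lambda>x. fst (G x)) has_vector_derivative fst (odeR r z G t)) (at t)"
      by (rule has_vector_derivative_fst'[OF gd])
    have g2: "((\<lambda>x. snd (G x)) has_vector_derivative snd (odeR r z G t)) (at t)"
      by (rule has_vector_derivative_snd'[OF gd])
    have u1: "k t * fst (odeR r z F t) + D * fst (F t) = fst (odeR r z G t)"
      using vector_derivative_unique_at[OF kF1[unfolded eq1] g1] .
    have u2: "k t * snd (odeR r z F t) + D * snd (F t) = snd (odeR r z G t)"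
      using vector_derivative_unique_at[OF kF2[unfolded eq2] g2] .
    have o1: "fst (odeR r z G t) = k t * fst (odeR r z F t)"
      unfolding odeR_def fst_conv Gk1[of t] Gk2[of t] by (simp add: algebra_simps)
    have o2: "snd (odeR r z G t) = k t * snd (odeR r z F t)"
      unfolding odeR_def snd_conv Gk1[of t] Gk2[of t] by (simp add: algebra_simps)
    have "D * fst (F t) = 0" "D * snd (F t) = 0" using u1 o1 u2 o2 by auto
    then have "D = 0" using Fnz[of t] by (cases "F t") (auto simp: zero_prod_def)
    then show ?thesis using D by simp
  qed
  have "k x = k 0" for x by (rule AC_loc_const[OF ACk negl Dk])
  then have "G x = cscale (k 0) (F x)" for x
    using Gk1[of x] Gk2[of x] by (cases "G x") (simp add: cscale_def)
  then show ?thesis by blast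
qed

lemma AC_exp: "AC_on_ivl a b (\<lambda>t. exp (s * t))"
proof (rule AC_smooth[where f'="\<lambda>t. s * exp (s * t)" and B="\<bar>s\<bar> * exp (\<bar>s\<bar> * (\<bar>a\<bar> + \<bar>b\<bar>))"])
  fix x show "((\<lambda>t. exp (s * t)) has_real_derivative s * exp (s * x)) (at x)"
    by (auto intro!: derivative_eq_intros)
next
  fix x assume x: "x \<in> {a..b}"
  have "s * x \<le> \<bar>s\<bar> * (\<bar>a\<bar> + \<bar>b\<bar>)"
  proof -
    have "s * x \<le> \<bar>s\<bar> * \<bar>x\<bar>" by (metis abs_ge_self abs_mult)
    also have "\<dots> \<le> \<bar>s\<bar> * (\<bar>a\<bar> + \<bar>b\<bar>)" using x by (intro mult_left_mono) auto
    finally show ?thesis .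
  qed
  then have "exp (s * x) \<le> exp (\<bar>s\<bar> * (\<bar>a\<bar> + \<bar>b\<bar>))" by simp
  then show "\<bar>s * exp (s * x)\<bar> \<le> \<bar>s\<bar> * exp (\<bar>s\<bar> * (\<bar>a\<bar> + \<bar>b\<bar>))"
    by (simp add: abs_mult mult_left_mono)
qed

lemma sign_aux1: "A \<ge> 0 \<Longrightarrow> B \<ge> 0 \<Longrightarrow> 0 \<le> 2*\<bar>c\<bar>*(A+B) + 2*c*(A-B :: real)"
  by (cases "c \<ge> 0") (auto simp: algebra_simps intro: mult_nonneg_nonpos)
lemma sign_aux2: "A \<ge> 0 \<Longrightarrow> B \<ge> 0 \<Longrightarrow> 0 \<le> 2*\<bar>c\<bar>*(A+B) - 2*c*(A-B :: real)"
  by (cases "c \<ge> 0") (auto simp: algebra_simps intro: mult_nonneg_nonpos)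

lemma sol_nonzero:
  assumes Psi: "AC_loc \<Psi>" and dP: "AE x in lborel. (\<Psi> has_vector_derivative odeR q z \<Psi> x) (at x)"
    and x0: "\<Psi> x0 \<noteq> 0"
  shows "\<Psi> x \<noteq> 0"
proof -
  obtain N where N: "N \<in> null_sets lborel" "\<And>x. x \<notin> N \<Longrightarrow> (\<Psi> has_vector_derivative odeR q z \<Psi> x) (at x)"
    using AE_lborel_null[OF dP] by blast
  have negl: "negligible N" using N(1) null_lborel_negligible by blast
  define n where "n x = Re (fst (\<Psi> x) * cnj (fst (\<Psi> x)) + snd (\<Psi> x) * cnj (snd (\<Psi> x)))" for x
  define A where "A x = (cmod (fst (\<Psi> x)))^2" for x
  define B where "B x = (cmod (snd (\<Psi> x)))^2" for x
  have nAB: "n x = A x + B x" for x unfolding n_def A_def B_def by (simp only: plus_complex.sel Re_mult_cnj_sq)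
  have A0: "A x \<ge> 0" and B0: "B x \<ge> 0" for x by (auto simp: A_def B_def)
  have npos: "n x > 0" if "\<Psi> x \<noteq> 0" for x unfolding n_def by (rule pos_of_nonzero[OF that])
  have nzero: "n x = 0" if "\<Psi> x = 0" for x using that by (simp add: n_def zero_prod_def)
  define c where "c = Im z"
  define k where "k = 2 * \<bar>c\<bar>"
  have nd: "(n has_real_derivative 2 * c * (A t - B t)) (at t)" if t: "t \<notin> N" for t
  proof -
    have fd: "(\<Psi> has_vector_derivative odeR q z \<Psi> t) (at t)" using N(2) t by blast
    note p'0 = has_field_derivative_Re[OF has_vector_derivative_add[OF
        has_vector_derivative_mult[OF has_vector_derivative_fst'[OF fd] has_vector_derivative_cnj[OF has_vector_derivative_fst'[OF fd]]]
        has_vector_derivative_mult[OF has_vector_derivative_snd'[OF fd] has_vector_derivative_cnj[OF has_vector_derivative_snd'[OF fd]]]]]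
    have "Re (fst (\<Psi> t) * cnj (fst (odeR q z \<Psi> t)) + fst (odeR q z \<Psi> t) * cnj (fst (\<Psi> t)) +
          (snd (\<Psi> t) * cnj (snd (odeR q z \<Psi> t)) + snd (odeR q z \<Psi> t) * cnj (snd (\<Psi> t))))
        = 2 * c * (A t - B t)"
      unfolding A_def B_def c_def odeR_def cmod_power2 by (simp add: algebra_simps power2_eq_square)
    then show ?thesis using p'0 unfolding n_def by simp
  qed
  have ACn: "AC_on_ivl a b n" for a b
  proof -
    have Pa: "AC_on_ivl a b \<Psi>" using Psi unfolding AC_loc_def by auto
    show ?thesis unfolding n_def by (intro AC_Re AC_add AC_mult AC_cnj AC_fst AC_snd Pa)
  qed
  show ?thesis
  proof (cases "x0 \<le> x")
    case True
    define h where "h t = exp (k * t) * n t" for t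
    have ACh: "AC_on_ivl x0 x h" unfolding h_def by (intro AC_mult AC_exp ACn)
    have "h x0 \<le> h x"
    proof (rule AC_mono_deriv[OF ACh True negl])
      fix t assume t: "t \<notin> N"
      have "(h has_real_derivative (k * exp (k * t)) * n t + (2 * c * (A t - B t)) * exp (k * t)) (at t)"
        unfolding h_def by (rule DERIV_mult[OF _ nd[OF t]]) (auto intro!: derivative_eq_intros)
      moreover have "(k * exp (k * t)) * n t + (2 * c * (A t - B t)) * exp (k * t)
          = exp (k * t) * (2*\<bar>c\<bar>*(A t + B t) + 2*c*(A t - B t))"
        by (simp add: k_def nAB algebra_simps)
      moreover have "0 \<le> exp (k * t) * (2*\<bar>c\<bar>*(A t + B t) + 2*c*(A t - B t))"
        using sign_aux1[OF A0 B0] by simp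
      ultimately show "\<exists>d\<ge>0. (h has_real_derivative d) (at t)" by metis
    qed
    moreover have "h x0 > 0" using npos[OF x0] by (simp add: h_def)
    ultimately have "h x > 0" by simp
    then have "n x > 0" by (simp add: h_def zero_less_mult_iff)
    then show ?thesis using nzero[of x] by force
  next
    case False
    then have le: "x \<le> x0" by simp
    define g where "g t = - (exp (- k * t) * n t)" for t
    have ACg: "AC_on_ivl x x0 g" unfolding g_def by (intro AC_minus AC_mult AC_exp ACn)
    have "g x \<le> g x0"
    proof (rule AC_mono_deriv[OF ACg le negl])
      fix t assume t: "t \<notin> N"
      have "((\<lambda>t. exp (- k * t) * n t) has_real_derivative (- k * exp (- k * t)) * n t + (2 * c * (A t - B t)) * exp (- k * t)) (at t)"
        by (rule DERIV_mult[OF _ nd[OF t]]) (auto intro!: derivative_eq_intros)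
      then have "(g has_real_derivative - ((- k * exp (- k * t)) * n t + (2 * c * (A t - B t)) * exp (- k * t))) (at t)"
        unfolding g_def by (rule DERIV_minus)
      moreover have "- ((- k * exp (- k * t)) * n t + (2 * c * (A t - B t)) * exp (- k * t))
          = exp (- k * t) * (2*\<bar>c\<bar>*(A t + B t) - 2*c*(A t - B t))"
        by (simp add: k_def nAB algebra_simps)
      moreover have "0 \<le> exp (- k * t) * (2*\<bar>c\<bar>*(A t + B t) - 2*c*(A t - B t))"
        using sign_aux2[OF A0 B0] by simp
      ultimately show "\<exists>d\<ge>0. (g has_real_derivative d) (at t)" by metis
    qed
    moreover have "exp (- k * x0) * n x0 > 0" using npos[OF x0] by simp
    ultimately have "exp (- k * x) * n x > 0" by (simp add: g_def)
    then have "n x > 0" by (simp add: zero_less_mult_iff)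
    then show ?thesis using nzero[of x] by force
  qed
qed

lemma alg_Phi:
  fixes p1 p2 q z :: complex and n nd sd :: real
  assumes n: "n = (cmod p1)^2 + (cmod p2)^2" "n \<noteq> 0"
    and nd: "nd = 2 * Im z * ((cmod p1)^2 - (cmod p2)^2)"
    and sd: "sd = (0 * n - Im z * nd) / (n * n)"
  defines "q1 \<equiv> q + complex_of_real (4 * Im z) * p1 * cnj p2 / complex_of_real n"
  shows "complex_of_real (Im z / n) * cnj (\<i> * z * p2 - cnj q * p1) + complex_of_real sd * cnj p2
          = q1 * (complex_of_real (Im z / n) * - cnj p1) - \<i> * z * (complex_of_real (Im z / n) * cnj p2)"
    and "complex_of_real (Im z / n) * - cnj (q * p2 - \<i> * z * p1) + complex_of_real sd * - cnj p1
          = \<i> * z * (complex_of_real (Im z / n) * - cnj p1) - cnj q1 * (complex_of_real (Im z / n) * cnj p2)"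
proof -
  have n': "n = (Re p1)^2 + (Im p1)^2 + (Re p2)^2 + (Im p2)^2" using n(1) by (simp add: cmod_power2)
  have nd': "nd = 2 * Im z * ((Re p1)^2 + (Im p1)^2 - (Re p2)^2 - (Im p2)^2)" using nd by (simp add: cmod_power2)
  show "complex_of_real (Im z / n) * cnj (\<i> * z * p2 - cnj q * p1) + complex_of_real sd * cnj p2
          = q1 * (complex_of_real (Im z / n) * - cnj p1) - \<i> * z * (complex_of_real (Im z / n) * cnj p2)"
    using n(2) unfolding complex_eq_iff q1_def sd nd'
    apply (simp add: field_simps power2_eq_square)
    apply (simp add: n' algebra_simps power2_eq_square)
    done
  show "complex_of_real (Im z / n) * - cnj (q * p2 - \<i> * z * p1) + complex_of_real sd * - cnj p1
          = \<i> * z * (complex_of_real (Im z / n) * - cnj p1) - cnj q1 * (complex_of_real (Im z / n) * cnj p2)"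
    using n(2) unfolding complex_eq_iff q1_def sd nd'
    apply (simp add: field_simps power2_eq_square)
    apply (simp add: n' algebra_simps power2_eq_square)
    done
qed


lemma AC_loc_cont:
  assumes "AC_loc f"
  shows "continuous_on UNIV f"
proof (rule continuous_at_imp_continuous_on, intro ballI)
  fix x :: real
  have "continuous_on {x-1..x+1} f" using assms AC_cont unfolding AC_loc_def by blast
  moreover have "x \<in> interior {x-1..x+1}" by simp
  ultimately show "isCont f x" by (rule continuous_on_interior)
qed

lemma norm_sq_deriv:
  assumes fd: "(\<Psi> has_vector_derivative odeR q z \<Psi> t) (at t)"
  shows "((\<lambda>x. (norm (\<Psi> x))^2) has_real_derivative 2 * Im z * ((cmod (fst (\<Psi> t)))^2 - (cmod (snd (\<Psi> t)))^2)) (at t)"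
proof -
  have e: "(\<lambda>x. (norm (\<Psi> x))^2) = (\<lambda>x. Re (fst (\<Psi> x) * cnj (fst (\<Psi> x)) + snd (\<Psi> x) * cnj (snd (\<Psi> x))))"
    by (rule ext) (simp only: norm_pair_sq plus_complex.sel Re_mult_cnj_sq)
  note p'0 = has_field_derivative_Re[OF has_vector_derivative_add[OF
        has_vector_derivative_mult[OF has_vector_derivative_fst'[OF fd] has_vector_derivative_cnj[OF has_vector_derivative_fst'[OF fd]]]
        has_vector_derivative_mult[OF has_vector_derivative_snd'[OF fd] has_vector_derivative_cnj[OF has_vector_derivative_snd'[OF fd]]]]]
  have "Re (fst (\<Psi> t) * cnj (fst (odeR q z \<Psi> t)) + fst (odeR q z \<Psi> t) * cnj (fst (\<Psi> t)) +
          (snd (\<Psi> t) * cnj (snd (odeR q z \<Psi> t)) + snd (odeR q z \<Psi> t) * cnj (snd (\<Psi> t))))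
        = 2 * Im z * ((cmod (fst (\<Psi> t)))^2 - (cmod (snd (\<Psi> t)))^2)"
    unfolding odeR_def cmod_power2 by (simp add: algebra_simps power2_eq_square)
  then show ?thesis using p'0 unfolding e by simp
qed

lemma wr_bound: "norm (wr F G x) \<le> (norm (F x))^2 + (norm (G x))^2"
proof -
  have ab: "a * b \<le> a^2 + b^2" if "a \<ge> 0" "b \<ge> 0" for a b :: real
    using that by (cases "a \<le> b") (auto simp: power2_eq_square intro: order.trans[OF mult_right_mono[of a b b]] order.trans[OF mult_left_mono[of b a a]])
  have "norm (wr F G x) \<le> cmod (fst (F x)) * cmod (snd (G x)) + cmod (snd (F x)) * cmod (fst (G x))"
    unfolding wr_def by (metis norm_triangle_ineq4 norm_mult)
  also have "\<dots> \<le> ((cmod (fst (F x)))^2 + (cmod (snd (G x)))^2) + ((cmod (snd (F x)))^2 + (cmod (fst (G x)))^2)"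
    by (intro add_mono ab) auto
  also have "\<dots> = (norm (F x))^2 + (norm (G x))^2" by (simp add: norm_pair_sq)
  finally show ?thesis .
qed

theorem theorem4p5:
  fixes q :: "real \<Rightarrow> complex" and z1 :: complex and \<Psi> :: "real \<Rightarrow> complex \<times> complex"
    and q1 :: "real \<Rightarrow> complex" and \<Phi> :: "real \<Rightarrow> complex \<times> complex"
  assumes "L1_loc q"
    and "Im z1 \<noteq> 0"
    and "wave_function q z1 \<Psi>"
    and "(\<integral>\<^sup>+ x. ennreal (1 / (norm (\<Psi> x))\<^sup>2) \<partial>lborel) < \<infinity>"
  defines "q1 \<equiv> (\<lambda>x. q x + 4 * Im z1 * fst (\<Psi> x) * cnj (snd (\<Psi> x)) / (norm (\<Psi> x))\<^sup>2)"
    and "\<Phi> \<equiv> (\<lambda>x. cscale (Im z1 / (norm (\<Psi> x))\<^sup>2) (Kop (\<Psi> x)))"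
  shows "simple_eigenvalue_with q1 z1 \<Phi>
       \<and> simple_eigenvalue_with q1 (cnj z1) (\<lambda>x. Kop (\<Phi> x))
       \<and> (\<forall>x. Kop (\<Phi> x) = cscale (- Im z1 / (norm (\<Psi> x))\<^sup>2) (\<Psi> x))"
proof -
  note cz = assms(2)
  have ACP: "AC_loc \<Psi>" and ex0: "\<exists>x. \<Psi> x \<noteq> 0" using assms(3) unfolding wave_function_def by auto
  have dP: "AE x in lborel. (\<Psi> has_vector_derivative odeR q z1 \<Psi> x) (at x)" by (rule wave_sol[OF assms(3)])
  obtain x0 where x0: "\<Psi> x0 \<noteq> 0" using ex0 by blast
  have Pnz: "\<Psi> x \<noteq> 0" for x by (rule sol_nonzero[OF ACP dP x0])
  have npos: "(norm (\<Psi> x))^2 > 0" for x using Pnz[of x] by simp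
  have nform: "(norm (\<Psi> x))^2 = (cmod (fst (\<Psi> x)))^2 + (cmod (snd (\<Psi> x)))^2" for x by (rule norm_pair_sq)
  define s where "s x = Im z1 / (norm (\<Psi> x))^2" for x
  have Phi_eq: "\<Phi> x = (complex_of_real (s x) * cnj (snd (\<Psi> x)), complex_of_real (s x) * - cnj (fst (\<Psi> x)))" for x
    by (simp add: \<Phi>_def s_def cscale_def Kop_def)
  have Phinz: "\<Phi> x \<noteq> 0" for x
  proof
    assume "\<Phi> x = 0"
    then have "complex_of_real (s x) * cnj (snd (\<Psi> x)) = 0" "complex_of_real (s x) * - cnj (fst (\<Psi> x)) = 0"
      unfolding Phi_eq by (auto simp: zero_prod_def)
    moreover have "s x \<noteq> 0" using cz npos[of x] by (simp add: s_def)
    ultimately have "snd (\<Psi> x) = 0" "fst (\<Psi> x) = 0" by auto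
    then show False using Pnz[of x] by (cases "\<Psi> x") (auto simp: zero_prod_def)
  qed
  have contP: "continuous_on UNIV \<Psi>" by (rule AC_loc_cont[OF ACP])
  have ACPhi: "AC_loc \<Phi>" unfolding AC_loc_def
  proof (intro allI)
    fix a b
    have Pa: "AC_on_ivl a b \<Psi>" using ACP unfolding AC_loc_def by auto
    have e: "(\<lambda>x. (norm (\<Psi> x))^2) = (\<lambda>x. Re (fst (\<Psi> x) * cnj (fst (\<Psi> x)) + snd (\<Psi> x) * cnj (snd (\<Psi> x))))"
      by (rule ext) (simp only: norm_pair_sq plus_complex.sel Re_mult_cnj_sq)
    have "AC_on_ivl a b (\<lambda>x. (norm (\<Psi> x))^2)" unfolding e
      by (intro AC_Re AC_add AC_mult AC_cnj AC_fst AC_snd Pa)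
    then have "AC_on_ivl a b (\<lambda>x. 1 / (norm (\<Psi> x))^2)" by (rule AC_inverse) (use npos in auto)
    then have "AC_on_ivl a b (\<lambda>x. Im z1 * (1 / (norm (\<Psi> x))^2))" by (intro AC_mult AC_const)
    then have ACs: "AC_on_ivl a b s" unfolding s_def by simp
    have "AC_on_ivl a b (\<lambda>x. (complex_of_real (s x) * cnj (snd (\<Psi> x)), complex_of_real (s x) * - cnj (fst (\<Psi> x))))"
      by (intro AC_Pair AC_mult AC_of_real ACs AC_cnj AC_minus AC_fst AC_snd Pa)
    then show "AC_on_ivl a b \<Phi>" unfolding Phi_eq[abs_def] by simp
  qed
  have dPhi1: "(\<Phi> has_vector_derivative odeR q1 z1 \<Phi> t) (at t)"
    if fd: "(\<Psi> has_vector_derivative odeR q z1 \<Psi> t) (at t)" for t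
  proof -
    define nd where "nd = 2 * Im z1 * ((cmod (fst (\<Psi> t)))^2 - (cmod (snd (\<Psi> t)))^2)"
    have nD: "((\<lambda>x. (norm (\<Psi> x))^2) has_real_derivative nd) (at t)"
      unfolding nd_def by (rule norm_sq_deriv[OF fd])
    have sD: "(s has_real_derivative (0 * (norm (\<Psi> t))^2 - Im z1 * nd) / ((norm (\<Psi> t))^2 * (norm (\<Psi> t))^2)) (at t)"
      unfolding s_def[abs_def] by (rule DERIV_divide[OF DERIV_const nD]) (use npos[of t] in simp)
    define sd where "sd = (0 * (norm (\<Psi> t))^2 - Im z1 * nd) / ((norm (\<Psi> t))^2 * (norm (\<Psi> t))^2)"
    have d1: "((\<lambda>x. complex_of_real (s x) * cnj (snd (\<Psi> x))) has_vector_derivative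
        complex_of_real (s t) * cnj (snd (odeR q z1 \<Psi> t)) + complex_of_real sd * cnj (snd (\<Psi> t))) (at t)"
      unfolding sd_def
      by (rule has_vector_derivative_mult[OF has_vector_derivative_of_real[OF sD] has_vector_derivative_cnj[OF has_vector_derivative_snd'[OF fd]]])
    have d2: "((\<lambda>x. complex_of_real (s x) * - cnj (fst (\<Psi> x))) has_vector_derivative
        complex_of_real (s t) * - cnj (fst (odeR q z1 \<Psi> t)) + complex_of_real sd * - cnj (fst (\<Psi> t))) (at t)"
      unfolding sd_def
      by (rule has_vector_derivative_mult[OF has_vector_derivative_of_real[OF sD] has_vector_derivative_minus[OF has_vector_derivative_cnj[OF has_vector_derivative_fst'[OF fd]]]])
    have PhiD: "(\<Phi> has_vector_derivative
        (complex_of_real (s t) * cnj (snd (odeR q z1 \<Psi> t)) + complex_of_real sd * cnj (snd (\<Psi> t)),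
         complex_of_real (s t) * - cnj (fst (odeR q z1 \<Psi> t)) + complex_of_real sd * - cnj (fst (\<Psi> t)))) (at t)"
      unfolding Phi_eq[abs_def] by (rule has_vector_derivative_Pair[OF d1 d2])
    have nz: "(norm (\<Psi> t))^2 \<noteq> 0" using npos[of t] by simp
    have q1t: "q1 t = q t + complex_of_real (4 * Im z1) * fst (\<Psi> t) * cnj (snd (\<Psi> t)) / complex_of_real ((norm (\<Psi> t))^2)"
      unfolding q1_def by simp
    have "(complex_of_real (s t) * cnj (snd (odeR q z1 \<Psi> t)) + complex_of_real sd * cnj (snd (\<Psi> t)),
         complex_of_real (s t) * - cnj (fst (odeR q z1 \<Psi> t)) + complex_of_real sd * - cnj (fst (\<Psi> t)))
        = odeR q1 z1 \<Phi> t"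
      unfolding odeR_def Phi_eq q1t s_def sd_def nd_def
      using alg_Phi(1)[OF nform[of t] nz refl refl, where q="q t" and z=z1] alg_Phi(2)[OF nform[of t] nz refl refl, where q="q t" and z=z1]
      by simp
    then show ?thesis using PhiD by simp
  qed
  have dPhi: "AE x in lborel. (\<Phi> has_vector_derivative odeR q1 z1 \<Phi> x) (at x)"
    using dP by (rule eventually_mono) (rule dPhi1)
  have contPhi: "continuous_on UNIV \<Phi>" by (rule AC_loc_cont[OF ACPhi])
  have measPhi: "\<Phi> \<in> borel_measurable lborel"
    using borel_measurable_continuous_onI[OF contPhi] by simp
  have nPhi: "(norm (\<Phi> x))^2 = (Im z1)^2 * (1 / (norm (\<Psi> x))^2)" for x
  proof -
    have "(norm (\<Phi> x))^2 = (cmod (complex_of_real (Im z1 / (norm (\<Psi> x))^2)))^2 * (norm (\<Psi> x))^2"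
      unfolding \<Phi>_def norm_cscale_sq norm_Kop ..
    also have "\<dots> = (Im z1 / (norm (\<Psi> x))^2)^2 * (norm (\<Psi> x))^2"
      by (simp only: norm_of_real power2_abs)
    also have "\<dots> = (Im z1)^2 * (1 / (norm (\<Psi> x))^2)"
    proof -
      have m: "(norm (\<Psi> x))^2 \<noteq> 0" using npos[of x] by simp
      have gen: "(a / m)^2 * m = a^2 * (1 / m)" if "m \<noteq> 0" for a m :: real
        using that by (simp add: power2_eq_square field_simps)
      show ?thesis by (rule gen[OF m])
    qed
    finally show ?thesis .
  qed
  have continv: "continuous_on UNIV (\<lambda>x. 1 / (norm (\<Psi> x))^2)"
    using npos by (intro continuous_intros contP) auto
  have measinv: "(\<lambda>x. 1 / (norm (\<Psi> x))^2) \<in> borel_measurable lborel"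
    using borel_measurable_continuous_onI[OF continv] by simp
  have intinv: "integrable lborel (\<lambda>x. 1 / (norm (\<Psi> x))^2)"
    unfolding integrable_iff_bounded
  proof
    show "(\<lambda>x. 1 / (norm (\<Psi> x))^2) \<in> borel_measurable lborel" by (rule measinv)
    have "(\<integral>\<^sup>+x. ennreal (norm (1 / (norm (\<Psi> x))^2)) \<partial>lborel) = (\<integral>\<^sup>+ x. ennreal (1 / (norm (\<Psi> x))\<^sup>2) \<partial>lborel)"
      by (intro nn_integral_cong) simp
    then show "(\<integral>\<^sup>+x. ennreal (norm (1 / (norm (\<Psi> x))^2)) \<partial>lborel) < \<infinity>" using assms(4) by simp
  qed
  have "integrable lborel (\<lambda>x. (Im z1)^2 * (1 / (norm (\<Psi> x))^2))"
    by (rule integrable_mult_right[OF intinv])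
  then have L2Phi: "L2 \<Phi>" unfolding L2_def nPhi using measPhi by blast
  have graph1: "D_graph q1 \<Phi> (\<lambda>x. cscale z1 (\<Phi> x))"
    unfolding graph_iff using L2Phi ACPhi L2_cscale[OF L2Phi] dPhi by simp
  have notAE: "\<not> (AE x in lborel. F x = 0)" if "\<And>x. F x \<noteq> 0" for F :: "real \<Rightarrow> complex \<times> complex"
  proof
    assume "AE x in lborel. F x = 0"
    then have "AE x in (lborel :: real measure). False" by (rule eventually_mono) (use that in blast)
    then show False using not_AE_False by blast
  qed
  have simple1: "\<exists>k. AE x in lborel. G x = cscale k (\<Phi> x)" if G: "D_graph q1 G (\<lambda>x. cscale z1 (G x))" for G
  proof -
    have GA: "L2 G" "AC_loc G" "AE x in lborel. (G has_vector_derivative odeR q1 z1 G x) (at x)"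
      using G unfolding graph_iff by auto
    have wc: "wr \<Phi> G x = wr \<Phi> G 0" for x by (rule wronskian_const[OF ACPhi GA(2) dPhi GA(3)])
    have i1: "integrable lborel (\<lambda>x. (norm (\<Phi> x))^2 + (norm (G x))^2)"
      using L2Phi GA(1) unfolding L2_def by auto
    have m1: "(\<lambda>x::real. wr \<Phi> G 0) \<in> borel_measurable lborel" by simp
    have a1: "AE x in lborel. norm (wr \<Phi> G 0) \<le> norm ((norm (\<Phi> x))^2 + (norm (G x))^2)"
    proof (intro AE_I2)
      fix x
      have "norm (wr \<Phi> G 0) \<le> (norm (\<Phi> x))^2 + (norm (G x))^2" using wr_bound[of \<Phi> G x] wc[of x] by simp
      then show "norm (wr \<Phi> G 0) \<le> norm ((norm (\<Phi> x))^2 + (norm (G x))^2)" by simp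
    qed
    have "integrable lborel (\<lambda>x::real. wr \<Phi> G 0)"
      using Bochner_Integration.integrable_bound[OF i1 m1 a1] .
    then have w0: "wr \<Phi> G 0 = 0" by (rule integrable_const_lborel)
    have "\<exists>k. \<forall>x. G x = cscale k (\<Phi> x)"
      by (rule simple_from_wronskian[OF ACPhi GA(2) dPhi GA(3) Phinz]) (use wc w0 in auto)
    then show ?thesis by auto
  qed
  have S1: "simple_eigenvalue_with q1 z1 \<Phi>"
    unfolding simple_eigenvalue_with_def eigenfunction_def using graph1 notAE[of \<Phi>, OF Phinz] simple1 by blast
  have graph2: "D_graph q1 (\<lambda>x. Kop (\<Phi> x)) (\<lambda>x. cscale (cnj z1) (Kop (\<Phi> x)))"
    by (rule graph_K[OF graph1])
  have KPhinz: "Kop (\<Phi> x) \<noteq> 0" for x using Phinz[of x] norm_Kop[of "\<Phi> x"] by (metis norm_eq_zero)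
  have simple2: "\<exists>k. AE x in lborel. G x = cscale k (Kop (\<Phi> x))"
    if G: "D_graph q1 G (\<lambda>x. cscale (cnj z1) (G x))" for G
  proof -
    have "D_graph q1 (\<lambda>x. Kop (G x)) (\<lambda>x. cscale (cnj (cnj z1)) (Kop (G x)))" by (rule graph_K[OF G])
    then have "D_graph q1 (\<lambda>x. Kop (G x)) (\<lambda>x. cscale z1 (Kop (G x)))" by simp
    then obtain k where k: "AE x in lborel. Kop (G x) = cscale k (\<Phi> x)" using simple1 by blast
    have "AE x in lborel. G x = cscale (- cnj k) (Kop (\<Phi> x))"
      using k
    proof (rule eventually_mono)
      fix x assume "Kop (G x) = cscale k (\<Phi> x)"
      then have "Kop (Kop (G x)) = Kop (cscale k (\<Phi> x))" by simp
      then show "G x = cscale (- cnj k) (Kop (\<Phi> x))"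
        by (cases "G x", cases "\<Phi> x") (simp add: Kop_def cscale_def, metis minus_minus)
    qed
    then show ?thesis by blast
  qed
  have S2: "simple_eigenvalue_with q1 (cnj z1) (\<lambda>x. Kop (\<Phi> x))"
    unfolding simple_eigenvalue_with_def eigenfunction_def using graph2 notAE[of "\<lambda>x. Kop (\<Phi> x)", OF KPhinz] simple2 by blast
  have S3: "\<forall>x. Kop (\<Phi> x) = cscale (- Im z1 / (norm (\<Psi> x))\<^sup>2) (\<Psi> x)"
    by (simp add: \<Phi>_def cscale_def Kop_def)
  show ?thesis using S1 S2 S3 by blast
qed

end
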